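(* Let $K$ be an algebraically closed valued field and $L$ a valued field extension of $K$ of transcendence degree $1$. Let $c,d\in L\setminus K$. Then $E(c/K)=E(d/K)$.
   Context: For $c\in L$, $T(c/K)=\{\mathrm{val}(c-b): b\in K\}$, and $E(c/K)=\{e\in\mathrm{val}(K): e+T(c/K)=T(c/K)\}$ is the stabilizer of $T(c/K)$ in the value group of $K$. *)

theory Defs
  imports "HOL-Computational_Algebra.Polynomial"
begin

text \<open>Subfields of an ambient field (the ambient field plays the role of L).\<close>
definition is_subfield :: "'a::field set \<Rightarrow> bool" where
  "is_subfield F \<longleftrightarrow> 0 \<in> F \<and> 1 \<in> F \<and>
     (\<forall>x\<in>F. \<forall>y\<in>F. x + y \<in> F \<and> x * y \<in> F) \<and>
     (\<forall>x\<in>F. - x \<in> F) \<and> (\<forall>x\<in>F. x \<noteq> 0 \<longrightarrow> inverse x \<in> F)"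

definition gen_subfield :: "'a::field set \<Rightarrow> 'a set" where
  "gen_subfield S = \<Inter>{F. is_subfield F \<and> S \<subseteq> F}"

definition poly_over :: "'a::field set \<Rightarrow> 'a poly \<Rightarrow> bool" where
  "poly_over F p \<longleftrightarrow> (\<forall>i. coeff p i \<in> F)"

definition algebraic_over :: "'a::field set \<Rightarrow> 'a \<Rightarrow> bool" where
  "algebraic_over F x \<longleftrightarrow> (\<exists>p. p \<noteq> 0 \<and> poly_over F p \<and> poly p x = 0)"

definition alg_closed_subfield :: "'a::field set \<Rightarrow> bool" where
  "alg_closed_subfield F \<longleftrightarrow> is_subfield F \<and>
     (\<forall>p. poly_over F p \<and> degree p \<ge> 1 \<longrightarrow> (\<exists>x\<in>F. poly p x = 0))"

text \<open>The whole field (UNIV) has transcendence degree 1 over K: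
  it has a transcendence basis over K consisting of a single element t.\<close>
definition trdeg_one_over :: "'a::field set \<Rightarrow> bool" where
  "trdeg_one_over K \<longleftrightarrow> (\<exists>t. \<not> algebraic_over K t \<and>
      (\<forall>x. algebraic_over (gen_subfield (insert t K)) x))"

text \<open>Krull valuation on the field, given on nonzero elements, with values
  in an ordered abelian group (value at 0, i.e. infinity, is irrelevant).\<close>
definition valuation :: "('a::field \<Rightarrow> 'g::linordered_ab_group_add) \<Rightarrow> bool" where
  "valuation v \<longleftrightarrow>
     (\<forall>x y. x \<noteq> 0 \<longrightarrow> y \<noteq> 0 \<longrightarrow> v (x * y) = v x + v y) \<and>
     (\<forall>x y. x \<noteq> 0 \<longrightarrow> y \<noteq> 0 \<longrightarrow> x + y \<noteq> 0 \<longrightarrow> min (v x) (v y) \<le> v (x + y))"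

definition value_group :: "('a::field \<Rightarrow> 'g::linordered_ab_group_add) \<Rightarrow> 'a set \<Rightarrow> 'g set" where
  "value_group v K = v ` (K - {0})"

definition cutT :: "('a::field \<Rightarrow> 'g::linordered_ab_group_add) \<Rightarrow> 'a set \<Rightarrow> 'a \<Rightarrow> 'g set" where
  "cutT v K c = {v (c - b) | b. b \<in> K}"

text \<open>E(c/K) = stabilizer of T(c/K) in val(K)\<close>
definition stabE :: "('a::field \<Rightarrow> 'g::linordered_ab_group_add) \<Rightarrow> 'a set \<Rightarrow> 'a \<Rightarrow> 'g set" where
  "stabE v K c = {e \<in> value_group v K. (\<lambda>t. e + t) ` cutT v K c = cutT v K c}"

end

theory Submission
  imports Defs
begin

fun nmul :: "nat \<Rightarrow> 'g::linordered_ab_group_add \<Rightarrow> 'g" where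
  "nmul 0 g = 0" | "nmul (Suc n) g = g + nmul n g"

lemma nmul_mono_pos: "(e::'g::linordered_ab_group_add) > 0 \<Longrightarrow> m \<le> n \<Longrightarrow> nmul m e \<le> nmul n e"
proof (induction n arbitrary: m)
  case 0 then show ?case by simp
next
  case (Suc n)
  show ?case
  proof (cases "m = Suc n")
    case False
    then have "m \<le> n" using Suc by simp
    then have "nmul m e \<le> nmul n e" using Suc by simp
    then show ?thesis using Suc.prems by (simp add: add_increasing)
  qed simp
qed

lemma nmul_nonneg: "(e::'g::linordered_ab_group_add) \<ge> 0 \<Longrightarrow> nmul n e \<ge> 0"
  by (induction n) (auto simp: add_nonneg_nonneg)

lemma nmul_Suc_less: "(e::'g::linordered_ab_group_add) > 0 \<Longrightarrow> nmul n e < nmul (Suc n) e"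
  by simp

lemma nmul_Suc': "nmul (Suc n) g = nmul n g + g"
  by (simp add: add.commute)

lemma coeff_lin_mult: "coeff ([:-a, 1:] * h) j = (if j = 0 then 0 else coeff h (j - 1)) - (a::'l::field) * coeff h j"
proof -
  have eq: "[:-a, 1:] * h = smult (-a) h + pCons 0 h"
    by simp
  have "coeff (smult (-a) h + pCons 0 h) j = (if j = 0 then 0 else coeff h (j - 1)) - a * coeff h j"
    by (cases j) simp_all
  then show ?thesis unfolding eq .
qed

locale vf =
  fixes v :: "'l::field \<Rightarrow> 'g::linordered_ab_group_add" and K :: "'l set"
  assumes val: "valuation v" and acK: "alg_closed_subfield K"
begin

lemma vmult: "x \<noteq> 0 \<Longrightarrow> y \<noteq> 0 \<Longrightarrow> v (x * y) = v x + v y"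
  using val unfolding valuation_def by blast

lemma vadd: "x \<noteq> 0 \<Longrightarrow> y \<noteq> 0 \<Longrightarrow> x + y \<noteq> 0 \<Longrightarrow> min (v x) (v y) \<le> v (x + y)"
  using val unfolding valuation_def by blast

lemma v1: "v 1 = 0"
  using vmult[of 1 1] by simp

lemma vm1: "v (-1) = 0"
proof -
  have "v (-1) + v (-1) = 0" using vmult[of "-1" "-1"] v1 by simp
  then show ?thesis
  proof (cases "v (-1)" "0::'g" rule: linorder_cases)
    case less then have "v (-1) + v (-1) < 0" by (simp add: add_neg_neg)
    then show ?thesis using \<open>v (-1) + v (-1) = 0\<close> by simp
  next
    case greater then have "v (-1) + v (-1) > 0" by (simp add: add_pos_pos)
    then show ?thesis using \<open>v (-1) + v (-1) = 0\<close> by simp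
  qed simp
qed

lemma vneg: "v (- x) = v x"
proof (cases "x = 0")
  case False
  have "v (-x) = v ((-1) * x)" by simp
  also have "\<dots> = v x" using vmult[of "-1" x] False vm1 by simp
  finally show ?thesis .
qed simp

lemma vinv: "x \<noteq> 0 \<Longrightarrow> v (inverse x) = - v x"
  using vmult[of x "inverse x"] v1 by (simp add: eq_neg_iff_add_eq_0 add.commute)

lemma vdiff_sym: "v (x - y) = v (y - x)"
  by (metis minus_diff_eq vneg)

lemma vsub: "x \<noteq> 0 \<Longrightarrow> y \<noteq> 0 \<Longrightarrow> x - y \<noteq> 0 \<Longrightarrow> min (v x) (v y) \<le> v (x - y)"
  using vadd[of x "-y"] vneg[of y] by simp

lemma vstrict: assumes "x \<noteq> 0" "y \<noteq> 0" "v x < v y" shows "v (x + y) = v x"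
proof -
  have xy: "x + y \<noteq> 0"
  proof
    assume "x + y = 0" then have "y = - x" by (simp add: eq_neg_iff_add_eq_0 add.commute)
    then show False using assms vneg by simp
  qed
  have "min (v (x+y)) (v (-y)) \<le> v ((x + y) + (-y))"
    using vadd[of "x+y" "-y"] xy assms by simp
  then have "min (v (x+y)) (v y) \<le> v x" by (simp add: vneg)
  then have "v (x+y) \<le> v x" using assms by (auto simp: min_def split: if_splits)
  moreover have "v x \<le> v (x + y)" using vadd[of x y] assms xy by simp
  ultimately show ?thesis by simp
qed

lemma vpow: "x \<noteq> 0 \<Longrightarrow> v (x ^ n) = nmul n (v x)"
  by (induction n) (simp_all add: v1 vmult)

lemma vsum2: assumes "a = 0 \<or> C \<le> v a" "b = 0 \<or> C \<le> v b"
  shows "a + b = 0 \<or> C \<le> v (a + b)"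
proof (cases "a = 0 \<or> b = 0")
  case True then show ?thesis using assms by auto
next
  case False
  show ?thesis
  proof (cases "a + b = 0")
    case False
    then have "min (v a) (v b) \<le> v (a + b)" using vadd[of a b] \<open>\<not> (a = 0 \<or> b = 0)\<close> by simp
    moreover have "C \<le> min (v a) (v b)" using assms \<open>\<not> (a = 0 \<or> b = 0)\<close> by simp
    ultimately show ?thesis by (meson order_trans)
  qed simp
qed

lemma vsum: assumes "finite A" "\<And>i. i \<in> A \<Longrightarrow> f i = 0 \<or> C \<le> v (f i)"
  shows "sum f A = 0 \<or> C \<le> v (sum f A)"
  using assms
proof (induction A rule: finite_induct)
  case empty then show ?case by simp
next
  case (insert a A)
  then show ?case using vsum2[of "f a" C "sum f A"] by simp
qed

lemma vprod_list: "(\<And>a. a \<in> set xs \<Longrightarrow> f a \<noteq> 0) \<Longrightarrow>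
   prod_list (map f xs) \<noteq> 0 \<and> v (prod_list (map f xs)) = sum_list (map (\<lambda>a. v (f a)) xs)"
  by (induction xs) (auto simp: v1 vmult)


lemma sfK: "is_subfield K" using acK unfolding alg_closed_subfield_def by blast
lemma K0: "0 \<in> K" using sfK unfolding is_subfield_def by blast
lemma K1: "1 \<in> K" using sfK unfolding is_subfield_def by blast
lemma Kadd: "a \<in> K \<Longrightarrow> b \<in> K \<Longrightarrow> a + b \<in> K" using sfK unfolding is_subfield_def by blast
lemma Kmult: "a \<in> K \<Longrightarrow> b \<in> K \<Longrightarrow> a * b \<in> K" using sfK unfolding is_subfield_def by blast
lemma Kneg: "a \<in> K \<Longrightarrow> - a \<in> K" using sfK unfolding is_subfield_def by blast
lemma Kinv: "a \<in> K \<Longrightarrow> inverse a \<in> K"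
  using sfK unfolding is_subfield_def by (cases "a = 0") auto
lemma Kdiff: "a \<in> K \<Longrightarrow> b \<in> K \<Longrightarrow> a - b \<in> K" using Kadd Kneg by (metis diff_conv_add_uminus)
lemma Kdiv: "a \<in> K \<Longrightarrow> b \<in> K \<Longrightarrow> a / b \<in> K" using Kmult Kinv by (metis divide_inverse)
lemma Ksum: "finite A \<Longrightarrow> (\<And>i. i \<in> A \<Longrightarrow> f i \<in> K) \<Longrightarrow> sum f A \<in> K"
  by (induction A rule: finite_induct) (auto simp: K0 Kadd)
lemma Kprod: "finite A \<Longrightarrow> (\<And>i. i \<in> A \<Longrightarrow> f i \<in> K) \<Longrightarrow> prod f A \<in> K"
  by (induction A rule: finite_induct) (auto simp: K1 Kmult)
lemma Kpow: "a \<in> K \<Longrightarrow> a ^ n \<in> K"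
  by (induction n) (auto simp: K1 Kmult)

lemma po_pCons: "poly_over K (pCons a p) \<longleftrightarrow> a \<in> K \<and> poly_over K p"
  unfolding poly_over_def
  by (metis coeff_pCons_0 coeff_pCons_Suc not0_implies_Suc)
lemma po_0: "poly_over K 0" by (simp add: poly_over_def K0)
lemma po_const: "a \<in> K \<Longrightarrow> poly_over K [:a:]" using po_pCons po_0 by simp
lemma po_add: "poly_over K p \<Longrightarrow> poly_over K q \<Longrightarrow> poly_over K (p + q)"
  by (simp add: poly_over_def Kadd)
lemma po_neg: "poly_over K p \<Longrightarrow> poly_over K (- p)"
  by (simp add: poly_over_def Kneg)
lemma po_mult: "poly_over K p \<Longrightarrow> poly_over K q \<Longrightarrow> poly_over K (p * q)"
  unfolding poly_over_def coeff_mult by (auto intro!: Ksum Kmult)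
lemma po_smult: "a \<in> K \<Longrightarrow> poly_over K p \<Longrightarrow> poly_over K (smult a p)"
  by (simp add: poly_over_def Kmult)
lemma po_monom: "a \<in> K \<Longrightarrow> poly_over K (monom a n)"
  by (simp add: poly_over_def K0)
lemma po_sum: "finite A \<Longrightarrow> (\<And>i. i \<in> A \<Longrightarrow> poly_over K (f i)) \<Longrightarrow> poly_over K (sum f A)"
  by (induction A rule: finite_induct) (auto simp: po_0 po_add)
lemma po_prod: "finite A \<Longrightarrow> (\<And>i. i \<in> A \<Longrightarrow> poly_over K (f i)) \<Longrightarrow> poly_over K (prod f A)"
proof (induction A rule: finite_induct)
  case empty
  have "poly_over K [:1:]" using po_const K1 by blast
  then show ?case by (simp add: one_pCons)
qed (auto simp: po_mult)
lemma po_poly: "poly_over K p \<Longrightarrow> s \<in> K \<Longrightarrow> poly p s \<in> K"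
  by (induction p) (auto simp: po_pCons K0 Kadd Kmult)
lemma po_sdiv: "poly_over K p \<Longrightarrow> c \<in> K \<Longrightarrow> poly_over K (synthetic_div p c)"
  by (induction p) (auto simp: po_pCons po_0 po_poly)
lemma po_lin: "a \<in> K \<Longrightarrow> poly_over K [:a, 1:]"
  by (simp add: po_pCons po_const K1 po_0)

definition linprod :: "'l list \<Rightarrow> 'l poly" where
  "linprod rs = prod_list (map (\<lambda>a. [:-a, 1:]) rs)"

lemma linprod_Cons: "linprod (a # rs) = [:-a, 1:] * linprod rs"
  by (simp add: linprod_def)
lemma linprod_Nil: "linprod [] = 1"
  by (simp add: linprod_def)
lemma poly_linprod: "poly (linprod rs) x = prod_list (map (\<lambda>a. x - a) rs)"
  by (induction rs) (simp_all add: linprod_def algebra_simps)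

lemma splitK: "poly_over K p \<Longrightarrow> p \<noteq> 0 \<Longrightarrow>
  \<exists>\<beta> rs. \<beta> \<in> K \<and> \<beta> \<noteq> 0 \<and> set rs \<subseteq> K \<and> length rs = degree p \<and> p = smult \<beta> (linprod rs)"
proof (induction "degree p" arbitrary: p)
  case 0
  then obtain a where a: "p = [:a:]" using degree0_coeffs by metis
  then have "a \<in> K" "a \<noteq> 0" using 0 po_pCons by auto
  then show ?case using a 0 by (intro exI[of _ a] exI[of _ "[]"]) (simp add: linprod_Nil)
next
  case (Suc n)
  then have "degree p \<ge> 1" by simp
  then obtain a where a: "a \<in> K" "poly p a = 0"
    using acK Suc.prems unfolding alg_closed_subfield_def by blast
  define q where "q = synthetic_div p a"
  have pq: "p = [:-a, 1:] * q"
    using synthetic_div_correct'[of a p] a by (simp add: q_def)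
  have dq: "degree q = n" using Suc.hyps(2) degree_synthetic_div[of p a] by (simp add: q_def)
  have q0: "q \<noteq> 0" using pq Suc.prems by auto
  have qK: "poly_over K q" using po_sdiv Suc.prems a by (simp add: q_def)
  obtain \<beta> rs where r: "\<beta> \<in> K" "\<beta> \<noteq> 0" "set rs \<subseteq> K" "length rs = degree q" "q = smult \<beta> (linprod rs)"
    using Suc.hyps(1)[OF dq[symmetric] qK q0] by blast
  show ?case
    using r a dq Suc.hyps(2) pq
    by (intro exI[of _ \<beta>] exI[of _ "a # rs"]) (simp add: linprod_Cons mult_smult_right)
qed

lemma notK_nonroot: assumes "x \<notin> K" "poly_over K p" "p \<noteq> 0" shows "poly p x \<noteq> 0"
proof -
  obtain \<beta> rs where r: "\<beta> \<in> K" "\<beta> \<noteq> 0" "set rs \<subseteq> K" "p = smult \<beta> (linprod rs)"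
    using splitK assms by blast
  have "prod_list (map (\<lambda>a. x - a) rs) \<noteq> 0"
    using r(3) assms(1) by (induction rs) auto
  then show ?thesis using r by (simp add: poly_linprod)
qed


lemma apx:
  assumes x: "x \<notin> K" and s: "s \<in> K" and rs: "set rs \<subseteq> K" and d: "d > 0"
    and close: "\<forall>a\<in>set rs. v (x - a) + d \<le> v (x - s)"
  shows "poly (linprod rs) s \<noteq> 0 \<and> (poly (linprod rs) x - poly (linprod rs) s = 0 \<or>
           v (poly (linprod rs) s) + d \<le> v (poly (linprod rs) x - poly (linprod rs) s))"
  using rs close
proof (induction rs)
  case Nil then show ?case by (simp add: linprod_Nil)
next
  case (Cons a rs)
  define qx where "qx = poly (linprod rs) x"
  define qs where "qs = poly (linprod rs) s"
  have IH: "qs \<noteq> 0" "qx - qs = 0 \<or> v qs + d \<le> v (qx - qs)"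
    using Cons unfolding qx_def qs_def by auto
  have aK: "a \<in> K" using Cons by simp
  have xa: "x - a \<noteq> 0" using x aK by auto
  have xs: "x - s \<noteq> 0" using x s by auto
  have cl: "v (x - a) + d \<le> v (x - s)" using Cons by simp
  have lt: "v (x - a) < v (x - s)"
  proof -
    have "v (x - a) < v (x - a) + d" using d by simp
    then show ?thesis using cl by (rule less_le_trans)
  qed
  have sa_eq: "(x - a) + (- (x - s)) = s - a" by simp
  have "v ((x - a) + (- (x - s))) = v (x - a)"
    by (rule vstrict) (use xa xs lt vneg vdiff_sym in auto)
  then have vsa: "v (s - a) = v (x - a)" by (simp only: sa_eq)
  have sa: "s - a \<noteq> 0"
  proof
    assume "s - a = 0" then have "s = a" by simp
    then show False using lt by simp
  qed
  have P1x: "poly (linprod (a # rs)) x = (x - a) * qx" by (simp add: linprod_Cons qx_def algebra_simps)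
  have P1s: "poly (linprod (a # rs)) s = (s - a) * qs" by (simp add: linprod_Cons qs_def algebra_simps)
  have vP1s: "v ((s - a) * qs) = v (x - a) + v qs" using vmult sa IH vsa by simp
  have diff: "(x - a) * qx - (s - a) * qs = (x - a) * (qx - qs) + (x - s) * qs"
    by (simp add: algebra_simps)
  have t1: "(x - a) * (qx - qs) = 0 \<or> v (x - a) + v qs + d \<le> v ((x - a) * (qx - qs))"
  proof (cases "qx - qs = 0")
    case False
    then have "v qs + d \<le> v (qx - qs)" using IH by simp
    then have "v (x - a) + (v qs + d) \<le> v (x - a) + v (qx - qs)" by simp
    then show ?thesis using vmult[OF xa False] by (simp add: add.assoc)
  qed simp
  have t2: "(x - s) * qs = 0 \<or> v (x - a) + v qs + d \<le> v ((x - s) * qs)"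
  proof -
    have "v (x - a) + d + v qs \<le> v (x - s) + v qs" using cl by simp
    moreover have "v (x - a) + v qs + d = v (x - a) + d + v qs" by (simp add: add_ac)
    ultimately show ?thesis using vmult[OF xs IH(1)] by simp
  qed
  show ?case
    using vsum2[OF t1 t2] P1x P1s diff vP1s sa IH(1) by simp
qed

definition mfun :: "'g \<Rightarrow> 'l \<Rightarrow> 'g" where
  "mfun \<mu> r = (if r = 0 then \<mu> else min \<mu> (v r))"

lemma gauss:
  assumes "\<beta> \<noteq> 0"
  shows "\<forall>j. coeff (smult \<beta> (linprod rs)) j \<noteq> 0 \<longrightarrow>
     v \<beta> + sum_list (map (mfun \<mu>) rs) \<le> v (coeff (smult \<beta> (linprod rs)) j) + nmul j \<mu>"
proof (induction rs)
  case Nil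
  show ?case by (simp add: linprod_Nil) (metis coeff_pCons_0 coeff_pCons_Suc coeff_0 nmul.simps(1) add_0_right not0_implies_Suc order_refl)
next
  case (Cons a rs)
  define h where "h = smult \<beta> (linprod rs)"
  define B where "B = v \<beta> + sum_list (map (mfun \<mu>) rs)"
  have IH: "\<And>j. coeff h j \<noteq> 0 \<Longrightarrow> B \<le> v (coeff h j) + nmul j \<mu>"
    using Cons unfolding h_def B_def by blast
  have eq: "smult \<beta> (linprod (a # rs)) = [:-a, 1:] * h"
    by (simp add: h_def linprod_Cons mult_smult_right)
  have newB: "v \<beta> + sum_list (map (mfun \<mu>) (a # rs)) = (B + mfun \<mu> a)"
    by (simp add: B_def algebra_simps)
  have ma1: "mfun \<mu> a \<le> \<mu>" by (simp add: mfun_def)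
  have ma2: "a \<noteq> 0 \<Longrightarrow> mfun \<mu> a \<le> v a" by (simp add: mfun_def)
  show ?case
  proof (intro allI impI)
    fix j
    assume nz: "coeff (smult \<beta> (linprod (a # rs))) j \<noteq> 0"
    define T1 where "T1 = (if j = 0 then 0 else coeff h (j - 1))"
    define T2 where "T2 = - (a * coeff h j)"
    have c: "coeff (smult \<beta> (linprod (a # rs))) j = T1 + T2"
      unfolding eq coeff_lin_mult T1_def T2_def by simp
    have b1: "T1 = 0 \<or> B + mfun \<mu> a - nmul j \<mu> \<le> v T1"
    proof (cases "j = 0 \<or> coeff h (j - 1) = 0")
      case False
      then obtain j' where j': "j = Suc j'" by (cases j) auto
      have "B \<le> v (coeff h j') + nmul j' \<mu>" using IH False j' by simp
      then have "B + mfun \<mu> a \<le> v (coeff h j') + nmul j' \<mu> + \<mu>" using ma1 add_mono by blast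
      then show ?thesis using j' by (simp add: T1_def algebra_simps)
    qed (auto simp: T1_def)
    have b2: "T2 = 0 \<or> B + mfun \<mu> a - nmul j \<mu> \<le> v T2"
    proof (cases "a = 0 \<or> coeff h j = 0")
      case False
      have "B \<le> v (coeff h j) + nmul j \<mu>" using IH False by simp
      then have "B + mfun \<mu> a \<le> v (coeff h j) + nmul j \<mu> + v a" using ma2 False add_mono by blast
      moreover have "v T2 = v a + v (coeff h j)" using vneg vmult False by (simp add: T2_def)
      ultimately show ?thesis by (simp add: algebra_simps)
    qed (auto simp: T2_def)
    have "T1 + T2 \<noteq> 0" using nz c by metis
    then have "B + mfun \<mu> a - nmul j \<mu> \<le> v (T1 + T2)" using vsum2[OF b1 b2] by simp
    then have "B + mfun \<mu> a \<le> v (coeff (smult \<beta> (linprod (a # rs))) j) + nmul j \<mu>"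
      using c by (simp add: diff_le_eq)
    then show "v \<beta> + sum_list (map (mfun \<mu>) (a # rs)) \<le> v (coeff (smult \<beta> (linprod (a # rs))) j) + nmul j \<mu>"
      by (simp only: newB)
  qed
qed


lemma sum_list_bound:
  assumes "\<forall>r\<in>set rs. f r \<le> g r + e"
  shows "sum_list (map f rs) \<le> sum_list (map g rs) + nmul (length rs) e"
  using assms
proof (induction rs)
  case Nil then show ?case by simp
next
  case (Cons r rs)
  then have "f r + sum_list (map f rs) \<le> (g r + e) + (sum_list (map g rs) + nmul (length rs) e)"
    by (intro add_mono) auto
  then show ?case by (simp add: add_ac)
qed

lemma vg_add: "a \<in> value_group v K \<Longrightarrow> b \<in> value_group v K \<Longrightarrow> a + b \<in> value_group v K"
proof -
  assume "a \<in> value_group v K" "b \<in> value_group v K"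
  then obtain x y where "x \<in> K" "x \<noteq> 0" "y \<in> K" "y \<noteq> 0" "a = v x" "b = v y"
    unfolding value_group_def by auto
  then show ?thesis unfolding value_group_def using vmult[of x y] Kmult[of x y]
    by (intro image_eqI[of _ _ "x * y"]) auto
qed
lemma vg_neg: "a \<in> value_group v K \<Longrightarrow> - a \<in> value_group v K"
proof -
  assume "a \<in> value_group v K"
  then obtain x where "x \<in> K" "x \<noteq> 0" "a = v x"
    unfolding value_group_def by auto
  then show ?thesis unfolding value_group_def using vinv[of x] Kinv[of x]
    by (intro image_eqI[of _ _ "inverse x"]) auto
qed
lemma vg_0: "0 \<in> value_group v K"
  unfolding value_group_def using v1 K1 by (auto intro!: image_eqI[of _ _ 1])

lemma stab_shift: "e \<in> stabE v K x \<Longrightarrow> (\<lambda>u. e + u) ` cutT v K x = cutT v K x"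
  unfolding stabE_def by blast

lemma stab_nmul: "e \<in> stabE v K x \<Longrightarrow> (\<lambda>u. nmul n e + u) ` cutT v K x = cutT v K x"
proof (induction n)
  case 0 then show ?case by simp
next
  case (Suc n)
  have "(\<lambda>u. nmul (Suc n) e + u) ` cutT v K x = (\<lambda>u. e + u) ` ((\<lambda>u. nmul n e + u) ` cutT v K x)"
    by (simp add: image_image add.assoc)
  also have "\<dots> = cutT v K x" using Suc stab_shift by simp
  finally show ?case .
qed

lemma improve: assumes "e \<in> stabE v K x" "b \<in> K"
  shows "\<exists>s\<in>K. v (x - s) = v (x - b) + nmul n e"
proof -
  have "v (x - b) \<in> cutT v K x" using assms unfolding cutT_def by blast
  then have "nmul n e + v (x - b) \<in> cutT v K x" using stab_nmul[OF assms(1), of n] by blast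
  then show ?thesis unfolding cutT_def by (auto simp: add.commute)
qed

lemma stab_neg: assumes "e \<in> stabE v K x" shows "- e \<in> stabE v K x"
proof -
  have "(\<lambda>u. - e + u) ` cutT v K x = (\<lambda>u. - e + u) ` ((\<lambda>u. e + u) ` cutT v K x)"
    using stab_shift[OF assms] by simp
  also have "\<dots> = cutT v K x" by (simp add: image_image)
  finally show ?thesis using assms vg_neg unfolding stabE_def by blast
qed


lemma core:
  assumes e: "e > 0" "e \<in> stabE v K x" and x: "x \<notin> K" and y: "y \<notin> K" and b0: "b0 \<in> K"
    and NI: "\<forall>b\<in>K. v (y - b) < v (y - b0) + e"
    and Q: "\<forall>j. poly_over K (Q j)"
    and rel: "(\<Sum>j\<le>n. poly (Q j) x * (y - b0) ^ j) = 0"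
    and j0: "j0 \<le> n" "poly (Q j0) x \<noteq> 0"
  shows False
proof -
  define z where "z = y - b0"
  have zK: "z \<notin> K"
  proof
    assume "z \<in> K" then have "z + b0 \<in> K" using Kadd b0 by blast
    then show False using y by (simp add: z_def)
  qed
  have z0: "z \<noteq> 0" using zK K0 by auto
  define \<mu> where "\<mu> = v z"
  have NI': "\<And>b. b \<in> K \<Longrightarrow> v (z - b) < \<mu> + e"
  proof -
    fix b assume "b \<in> K"
    then have "v (y - (b0 + b)) < v (y - b0) + e" using NI Kadd b0 by blast
    then show "v (z - b) < \<mu> + e" by (simp add: z_def \<mu>_def algebra_simps)
  qed
  define J where "J = {j. j \<le> n \<and> Q j \<noteq> 0}"
  have finJ: "finite J" unfolding J_def by simp
  have "\<forall>j\<in>J. \<exists>br. fst br \<in> K \<and> fst br \<noteq> 0 \<and> set (snd br) \<subseteq> K \<and> Q j = smult (fst br) (linprod (snd br))"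
  proof
    fix j assume "j \<in> J"
    then have "Q j \<noteq> 0" unfolding J_def by simp
    then obtain \<beta> rs where "\<beta> \<in> K" "\<beta> \<noteq> 0" "set rs \<subseteq> K" "Q j = smult \<beta> (linprod rs)"
      using splitK Q by blast
    then show "\<exists>br. fst br \<in> K \<and> fst br \<noteq> 0 \<and> set (snd br) \<subseteq> K \<and> Q j = smult (fst br) (linprod (snd br))"
      by (intro exI[of _ "(\<beta>, rs)"]) simp
  qed
  then obtain BR where BR: "\<And>j. j \<in> J \<Longrightarrow> fst (BR j) \<in> K \<and> fst (BR j) \<noteq> 0 \<and> set (snd (BR j)) \<subseteq> K \<and>
       Q j = smult (fst (BR j)) (linprod (snd (BR j)))"
    by metis
  define A where "A = (\<Union>j\<in>J. set (snd (BR j)))"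
  have finA: "finite A" unfolding A_def using finJ by simp
  have AK: "A \<subseteq> K" unfolding A_def using BR by blast
  define d where "d = nmul (Suc n) e"
  have d0: "d > 0"
  proof -
    have "0 \<le> e" using e(1) by (rule less_imp_le)
    then have "0 \<le> nmul n e" by (rule nmul_nonneg)
    then show ?thesis using e by (simp add: d_def add_pos_nonneg)
  qed
  obtain s where sK: "s \<in> K" and sclose: "\<forall>a\<in>A. v (x - a) + d \<le> v (x - s)"
  proof (cases "A = {}")
    case True then show ?thesis using that K0 by blast
  next
    case False
    define M where "M = Max ((\<lambda>a. v (x - a)) ` A)"
    have "M \<in> (\<lambda>a. v (x - a)) ` A" unfolding M_def using finA False by simp
    then obtain am where am: "am \<in> A" "M = v (x - am)" by blast
    have Mge: "\<forall>a\<in>A. v (x - a) \<le> M" unfolding M_def using finA by simp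
    obtain s where s: "s \<in> K" "v (x - s) = v (x - am) + nmul (Suc n) e"
      using improve[OF e(2), of am "Suc n"] am AK by blast
    have "\<forall>a\<in>A. v (x - a) + d \<le> v (x - s)"
      using Mge am s by (simp add: d_def)
    then show ?thesis using that s by blast
  qed
  have DQ: "\<And>j. j \<le> n \<Longrightarrow> poly (Q j) x - poly (Q j) s = 0 \<or>
      (poly (Q j) s \<noteq> 0 \<and> v (poly (Q j) s) + d \<le> v (poly (Q j) x - poly (Q j) s))"
  proof -
    fix j assume jn: "j \<le> n"
    show "poly (Q j) x - poly (Q j) s = 0 \<or>
      (poly (Q j) s \<noteq> 0 \<and> v (poly (Q j) s) + d \<le> v (poly (Q j) x - poly (Q j) s))"
    proof (cases "Q j = 0")
      case False
      then have jJ: "j \<in> J" using jn unfolding J_def by simp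
      define \<beta> where "\<beta> = fst (BR j)"
      define rs where "rs = snd (BR j)"
      have b: "\<beta> \<in> K" "\<beta> \<noteq> 0" "set rs \<subseteq> K" "Q j = smult \<beta> (linprod rs)"
        using BR[OF jJ] unfolding \<beta>_def rs_def by auto
      have rsA: "set rs \<subseteq> A" unfolding A_def rs_def using jJ by blast
      have ap: "poly (linprod rs) s \<noteq> 0 \<and> (poly (linprod rs) x - poly (linprod rs) s = 0 \<or>
           v (poly (linprod rs) s) + d \<le> v (poly (linprod rs) x - poly (linprod rs) s))"
        using apx[OF x sK b(3) d0] sclose rsA by blast
      define px where "px = poly (linprod rs) x"
      define ps where "ps = poly (linprod rs) s"
      have ps0: "ps \<noteq> 0" using ap ps_def by simp
      have e1: "poly (Q j) x - poly (Q j) s = \<beta> * (px - ps)"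
        using b(4) by (simp add: px_def ps_def algebra_simps)
      have e2: "poly (Q j) s = \<beta> * ps" using b(4) by (simp add: ps_def)
      show ?thesis
      proof (cases "px - ps = 0")
        case True then show ?thesis using e1 by simp
      next
        case False
        then have "v ps + d \<le> v (px - ps)" using ap px_def ps_def by simp
        then have "v \<beta> + (v ps + d) \<le> v \<beta> + v (px - ps)" by simp
        then have "v (\<beta> * ps) + d \<le> v (\<beta> * (px - ps))"
          using vmult[OF b(2) ps0] vmult[OF b(2) False] by (simp add: add.assoc)
        then show ?thesis using e1 e2 b(2) ps0 by simp
      qed
    qed simp
  qed
  define g where "g = (\<Sum>j\<le>n. monom (poly (Q j) s) j)"
  have gK: "poly_over K g" unfolding g_def
    by (intro po_sum po_monom po_poly) (use Q sK in auto)
  have cg: "\<And>j. coeff g j = (if j \<le> n then poly (Q j) s else 0)"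
    unfolding g_def coeff_sum coeff_monom by simp
  have j0s: "poly (Q j0) s \<noteq> 0"
  proof -
    have "poly (Q j0) x - poly (Q j0) s \<noteq> 0 \<or> poly (Q j0) s \<noteq> 0" using j0 by auto
    then show ?thesis using DQ[OF j0(1)] by auto
  qed
  have g0: "g \<noteq> 0" using cg[of j0] j0 j0s by auto
  have dg: "degree g \<le> n" unfolding g_def
    by (intro degree_sum_le) (auto intro: order_trans[OF degree_monom_le])
  obtain \<beta> \<rho>s where sp: "\<beta> \<in> K" "\<beta> \<noteq> 0" "set \<rho>s \<subseteq> K" "length \<rho>s = degree g" "g = smult \<beta> (linprod \<rho>s)"
    using splitK[OF gK g0] by blast
  define B where "B = v \<beta> + sum_list (map (mfun \<mu>) \<rho>s)"
  have zr: "\<And>r. r \<in> set \<rho>s \<Longrightarrow> z - r \<noteq> 0" using sp(3) zK by auto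
  have pgz: "poly g z = \<beta> * prod_list (map (\<lambda>r. z - r) \<rho>s)"
    using sp(5) by (simp add: poly_linprod)
  have vp: "prod_list (map (\<lambda>r. z - r) \<rho>s) \<noteq> 0 \<and>
      v (prod_list (map (\<lambda>r. z - r) \<rho>s)) = sum_list (map (\<lambda>r. v (z - r)) \<rho>s)"
    using vprod_list[of \<rho>s "\<lambda>r. z - r"] zr by blast
  have gz0: "poly g z \<noteq> 0" using pgz vp sp(2) by simp
  have vgz: "v (poly g z) = v \<beta> + sum_list (map (\<lambda>r. v (z - r)) \<rho>s)"
    using pgz vp sp(2) vmult by simp
  have each: "\<forall>r\<in>set \<rho>s. v (z - r) \<le> mfun \<mu> r + e"
  proof
    fix r assume r: "r \<in> set \<rho>s"
    then have rK: "r \<in> K" using sp(3) by blast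
    show "v (z - r) \<le> mfun \<mu> r + e"
    proof (cases "r = 0")
      case True then show ?thesis using e by (simp add: mfun_def \<mu>_def)
    next
      case False
      show ?thesis
      proof (cases "v r < \<mu>")
        case True
        have "v ((- r) + z) = v (- r)"
          by (rule vstrict) (use False z0 True vneg \<mu>_def in auto)
        then have "v (z - r) = v r" by (simp add: vneg algebra_simps)
        then show ?thesis using True False e by (simp add: mfun_def)
      next
        case ge: False
        then have "mfun \<mu> r = \<mu>" using False by (simp add: mfun_def)
        then show ?thesis using NI'[OF rK] by simp
      qed
    qed
  qed
  have upper: "v (poly g z) \<le> B + nmul n e"
  proof -
    have "sum_list (map (\<lambda>r. v (z - r)) \<rho>s) \<le> sum_list (map (mfun \<mu>) \<rho>s) + nmul (length \<rho>s) e"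
      using sum_list_bound[OF each] .
    also have "\<dots> \<le> sum_list (map (mfun \<mu>) \<rho>s) + nmul n e"
      using nmul_mono_pos[OF e(1)] sp(4) dg by simp
    finally have "v \<beta> + sum_list (map (\<lambda>r. v (z - r)) \<rho>s) \<le> v \<beta> + (sum_list (map (mfun \<mu>) \<rho>s) + nmul n e)"
      by simp
    then show ?thesis using vgz by (simp add: B_def add.assoc)
  qed
  have G: "\<forall>j. coeff g j \<noteq> 0 \<longrightarrow> B \<le> v (coeff g j) + nmul j \<mu>"
    using gauss[OF sp(2), of \<rho>s \<mu>] sp(5) by (simp add: B_def)
  have pgz2: "poly g z = (\<Sum>j\<le>n. poly (Q j) s * z ^ j)"
    unfolding g_def poly_sum poly_monom by simp
  have "poly g z = (\<Sum>j\<le>n. poly (Q j) s * z ^ j) - (\<Sum>j\<le>n. poly (Q j) x * z ^ j)"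
    using pgz2 rel by (simp add: z_def)
  also have "\<dots> = (\<Sum>j\<le>n. poly (Q j) s * z ^ j - poly (Q j) x * z ^ j)"
    by (simp add: sum_subtractf)
  also have "\<dots> = - (\<Sum>j\<le>n. (poly (Q j) x - poly (Q j) s) * z ^ j)"
    unfolding sum_negf[symmetric] by (rule sum.cong) (simp_all add: algebra_simps)
  finally have pgzm: "poly g z = - (\<Sum>j\<le>n. (poly (Q j) x - poly (Q j) s) * z ^ j)" .
  then have pgz3: "v (poly g z) = v (\<Sum>j\<le>n. (poly (Q j) x - poly (Q j) s) * z ^ j)"
    by (simp add: vneg)
  have terms: "\<And>j. j \<in> {..n} \<Longrightarrow> (poly (Q j) x - poly (Q j) s) * z ^ j = 0 \<or>
       B + d \<le> v ((poly (Q j) x - poly (Q j) s) * z ^ j)"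
  proof -
    fix j assume "j \<in> {..n}"
    then have jn: "j \<le> n" by simp
    define D where "D = poly (Q j) x - poly (Q j) s"
    show "(poly (Q j) x - poly (Q j) s) * z ^ j = 0 \<or> B + d \<le> v ((poly (Q j) x - poly (Q j) s) * z ^ j)"
    proof (cases "D = 0")
      case False
      then have h: "poly (Q j) s \<noteq> 0" "v (poly (Q j) s) + d \<le> v D" using DQ[OF jn] D_def by auto
      have cj: "coeff g j = poly (Q j) s" using cg jn by simp
      then have "coeff g j \<noteq> 0" using h by simp
      then have "B \<le> v (coeff g j) + nmul j \<mu>" using G by blast
      then have "B \<le> v (poly (Q j) s) + nmul j \<mu>" using cj by simp
      then have "B + d \<le> v (poly (Q j) s) + nmul j \<mu> + d" by simp
      also have "\<dots> = (v (poly (Q j) s) + d) + nmul j \<mu>" by (simp add: add_ac)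
      also have "\<dots> \<le> v D + nmul j \<mu>" using h by simp
      also have "\<dots> = v (D * z ^ j)" using vmult[OF False] vpow[OF z0] z0 \<mu>_def by simp
      finally show ?thesis by (simp add: D_def)
    qed (simp add: D_def)
  qed
  have vs: "(\<Sum>j\<le>n. (poly (Q j) x - poly (Q j) s) * z ^ j) = 0 \<or>
      B + d \<le> v (\<Sum>j\<le>n. (poly (Q j) x - poly (Q j) s) * z ^ j)"
    by (rule vsum) (use terms in auto)
  have "(\<Sum>j\<le>n. (poly (Q j) x - poly (Q j) s) * z ^ j) \<noteq> 0"
  proof
    assume "(\<Sum>j\<le>n. (poly (Q j) x - poly (Q j) s) * z ^ j) = 0"
    then have "poly g z = 0" using \<open>poly g z = - (\<Sum>j\<le>n. (poly (Q j) x - poly (Q j) s) * z ^ j)\<close> by simp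
    then show False using gz0 by simp
  qed
  then have "B + d \<le> v (poly g z)" using vs pgz3 by simp
  moreover have "B + nmul n e < B + d" using e by (simp add: d_def nmul_Suc')
  ultimately show False using upper by (meson not_le order_trans)
qed


definition relK :: "'l \<Rightarrow> 'l \<Rightarrow> bool" where
  "relK x y \<longleftrightarrow> (\<exists>Q n j0. (\<forall>j. poly_over K (Q j)) \<and> (\<Sum>j\<le>n. poly (Q j) x * y ^ j) = 0 \<and>
      j0 \<le> n \<and> poly (Q j0) x \<noteq> 0)"

lemma imp_from_rel:
  assumes e: "e > 0" "e \<in> stabE v K x" and x: "x \<notin> K" and y: "y \<notin> K"
    and rel: "\<forall>b0\<in>K. relK x (y - b0)" and b: "b \<in> K"
  shows "\<exists>b'\<in>K. v (y - b) + e \<le> v (y - b')"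
proof (rule ccontr)
  assume "\<not> ?thesis"
  then have NI: "\<forall>b'\<in>K. v (y - b') < v (y - b) + e" by (auto simp: not_le)
  obtain Q n j0 where "\<forall>j. poly_over K (Q j)" "(\<Sum>j\<le>n. poly (Q j) x * (y - b) ^ j) = 0"
      "j0 \<le> n" "poly (Q j0) x \<noteq> 0"
    using rel b unfolding relK_def by blast
  then show False using core[OF e x y b NI] by blast
qed

lemma shift_ok:
  assumes e: "e > 0" and IMP: "\<And>b. b \<in> K \<Longrightarrow> \<exists>b'\<in>K. v (y - b) + e \<le> v (y - b')"
    and y: "y \<notin> K"
    and f: "f \<in> value_group v K" "f \<le> e" "- f \<le> e"
  shows "(\<lambda>u. f + u) ` cutT v K y = cutT v K y"
proof -
  have G: "\<And>b. b \<in> K \<Longrightarrow> v (y - b) \<in> value_group v K"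
  proof -
    fix b assume bK: "b \<in> K"
    obtain b' where b': "b' \<in> K" "v (y - b) + e \<le> v (y - b')" using IMP[OF bK] by blast
    have "v (y - b) < v (y - b) + e" using e by simp
    then have lt: "v (y - b) < v (y - b')" using b'(2) by (rule less_le_trans)
    have yb: "y - b \<noteq> 0" "y - b' \<noteq> 0" using y bK b' by auto
    have "v ((y - b) + (- (y - b'))) = v (y - b)"
      by (rule vstrict) (use yb lt vneg vdiff_sym in auto)
    moreover have "(y - b) + (- (y - b')) = b' - b" by simp
    ultimately have "v (b' - b) = v (y - b)" by simp
    moreover have "b' - b \<in> K" "b' - b \<noteq> 0" using Kdiff b'(1) bK lt by auto
    ultimately show "v (y - b) \<in> value_group v K" unfolding value_group_def
      by (intro image_eqI[of _ _ "b' - b"]) auto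
  qed
  have DC: "\<And>\<delta> b. \<delta> \<in> value_group v K \<Longrightarrow> b \<in> K \<Longrightarrow> \<delta> \<le> v (y - b) \<Longrightarrow> \<delta> \<in> cutT v K y"
  proof -
    fix \<delta> b assume d: "\<delta> \<in> value_group v K" and bK: "b \<in> K" and le: "\<delta> \<le> v (y - b)"
    show "\<delta> \<in> cutT v K y"
    proof (cases "\<delta> = v (y - b)")
      case True then show ?thesis unfolding cutT_def using bK by blast
    next
      case False
      then have lt: "\<delta> < v (y - b)" using le by simp
      obtain a where a: "a \<in> K" "a \<noteq> 0" "v a = \<delta>" using d unfolding value_group_def by auto
      have yb: "y - b \<noteq> 0" using y bK by auto
      have "v ((- a) + (y - b)) = v (- a)"
        by (rule vstrict) (use a yb lt vneg in auto)
      then have "v (y - (b + a)) = \<delta>" using a vneg by (simp add: algebra_simps)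
      moreover have "b + a \<in> K" using Kadd a bK by blast
      ultimately show ?thesis unfolding cutT_def by blast
    qed
  qed
  show ?thesis
  proof
    show "(\<lambda>u. f + u) ` cutT v K y \<subseteq> cutT v K y"
    proof
      fix w assume "w \<in> (\<lambda>u. f + u) ` cutT v K y"
      then obtain b where bK: "b \<in> K" and w: "w = f + v (y - b)" unfolding cutT_def by blast
      obtain b' where b': "b' \<in> K" "v (y - b) + e \<le> v (y - b')" using IMP[OF bK] by blast
      have "f + v (y - b) \<le> v (y - b) + e" using f(2) by (simp add: add.commute)
      then have "w \<le> v (y - b')" using b'(2) w by (meson order_trans)
      moreover have "w \<in> value_group v K" using vg_add f(1) G[OF bK] w by simp
      ultimately show "w \<in> cutT v K y" using DC b'(1) by blast
    qed
    show "cutT v K y \<subseteq> (\<lambda>u. f + u) ` cutT v K y"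
    proof
      fix w assume "w \<in> cutT v K y"
      then obtain b where bK: "b \<in> K" and w: "w = v (y - b)" unfolding cutT_def by blast
      obtain b' where b': "b' \<in> K" "v (y - b) + e \<le> v (y - b')" using IMP[OF bK] by blast
      have "- f + v (y - b) \<le> v (y - b) + e" using f(3) by (simp add: add.commute)
      then have "- f + w \<le> v (y - b')" using b'(2) w by (meson order_trans)
      moreover have "- f + w \<in> value_group v K" using vg_add[OF vg_neg[OF f(1)] G[OF bK]] w by simp
      ultimately have "- f + w \<in> cutT v K y" using DC b'(1) by blast
      moreover have "w = f + (- f + w)" by simp
      ultimately show "w \<in> (\<lambda>u. f + u) ` cutT v K y" by blast
    qed
  qed
qed

lemma stab_sub:
  assumes x: "x \<notin> K" and y: "y \<notin> K" and rel: "\<forall>b0\<in>K. relK x (y - b0)"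
  shows "stabE v K x \<subseteq> stabE v K y"
proof
  fix f assume f: "f \<in> stabE v K x"
  then have fG: "f \<in> value_group v K" unfolding stabE_def by blast
  have "(\<lambda>u. f + u) ` cutT v K y = cutT v K y"
  proof (cases f "0::'g" rule: linorder_cases)
    case equal then show ?thesis by simp
  next
    case greater
    have IMP: "\<And>b. b \<in> K \<Longrightarrow> \<exists>b'\<in>K. v (y - b) + f \<le> v (y - b')"
      using imp_from_rel[OF greater f x y rel] by blast
    show ?thesis
      by (rule shift_ok[OF greater IMP y fG]) (use greater in auto)
  next
    case less
    then have g: "- f > 0" by simp
    have IMP: "\<And>b. b \<in> K \<Longrightarrow> \<exists>b'\<in>K. v (y - b) + (- f) \<le> v (y - b')"
      using imp_from_rel[OF g stab_neg[OF f] x y rel] by blast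
    show ?thesis
      by (rule shift_ok[OF g IMP y fG]) (use less in auto)
  qed
  then show "f \<in> stabE v K y" unfolding stabE_def using fG by blast
qed


definition RatF :: "'l \<Rightarrow> 'l set" where
  "RatF t = {poly f t / poly g t | f g. poly_over K f \<and> poly_over K g \<and> poly g t \<noteq> 0}"

lemma po_1: "poly_over K 1"
  using po_const[OF K1] by (simp add: one_pCons)

lemma RatF_K: "a \<in> K \<Longrightarrow> a \<in> RatF t"
  unfolding RatF_def using po_const[of a] po_1
  by (intro CollectI exI[of _ "[:a:]"] exI[of _ 1]) simp

lemma RatF_shift: "b \<in> K \<Longrightarrow> t + b \<in> RatF t"
  unfolding RatF_def using po_lin[of b] po_1
  by (intro CollectI exI[of _ "[:b, 1:]"] exI[of _ 1]) (simp add: add.commute)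

lemma RatF_sub: "is_subfield (RatF t)"
  unfolding is_subfield_def
proof (intro conjI ballI impI)
  show "0 \<in> RatF t" using RatF_K K0 by blast
  show "1 \<in> RatF t" using RatF_K K1 by blast
next
  fix a b assume "a \<in> RatF t" "b \<in> RatF t"
  then obtain f1 g1 f2 g2 where h: "poly_over K f1" "poly_over K g1" "poly g1 t \<noteq> 0" "a = poly f1 t / poly g1 t"
    "poly_over K f2" "poly_over K g2" "poly g2 t \<noteq> 0" "b = poly f2 t / poly g2 t"
    unfolding RatF_def by blast
  have ab: "a + b = poly (f1 * g2 + f2 * g1) t / poly (g1 * g2) t"
    using h by (simp add: add_frac_eq)
  show "a + b \<in> RatF t" unfolding RatF_def
    by (intro CollectI exI[of _ "f1 * g2 + f2 * g1"] exI[of _ "g1 * g2"])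
       (use h ab in \<open>auto simp: po_add po_mult\<close>)
  show "a * b \<in> RatF t" unfolding RatF_def
    by (intro CollectI exI[of _ "f1 * f2"] exI[of _ "g1 * g2"])
       (use h in \<open>auto simp: po_mult\<close>)
next
  fix a assume "a \<in> RatF t"
  then obtain f1 g1 where h: "poly_over K f1" "poly_over K g1" "poly g1 t \<noteq> 0" "a = poly f1 t / poly g1 t"
    unfolding RatF_def by blast
  show "- a \<in> RatF t" unfolding RatF_def
    by (intro CollectI exI[of _ "- f1"] exI[of _ g1]) (use h in \<open>auto simp: po_neg\<close>)
  assume "a \<noteq> 0"
  then have "poly f1 t \<noteq> 0" using h by auto
  then show "inverse a \<in> RatF t" unfolding RatF_def
    by (intro CollectI exI[of _ g1] exI[of _ f1]) (use h in auto)
qed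

lemma poly_altdef_ext: "degree (p::'l poly) \<le> m \<Longrightarrow> poly p x = (\<Sum>i\<le>m. coeff p i * x ^ i)"
proof -
  assume m: "degree p \<le> m"
  have "poly p x = (\<Sum>i\<le>degree p. coeff p i * x ^ i)" by (simp add: poly_altdef)
  also have "\<dots> = (\<Sum>i\<le>m. coeff p i * x ^ i)"
    by (rule sum.mono_neutral_left) (use m in \<open>auto simp: coeff_eq_0\<close>)
  finally show ?thesis .
qed

lemma alg_rel:
  assumes "algebraic_over (RatF t) z" shows "relK t z"
proof -
  obtain p where p: "p \<noteq> 0" "poly_over (RatF t) p" "poly p z = 0"
    using assms unfolding algebraic_over_def by blast
  have "\<forall>i. \<exists>fg. poly_over K (fst fg) \<and> poly_over K (snd fg) \<and> poly (snd fg) t \<noteq> 0 \<and>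
      coeff p i = poly (fst fg) t / poly (snd fg) t"
  proof
    fix i
    have "coeff p i \<in> RatF t" using p(2) unfolding poly_over_def by blast
    then obtain f g where "poly_over K f" "poly_over K g" "poly g t \<noteq> 0" "coeff p i = poly f t / poly g t"
      unfolding RatF_def by blast
    then show "\<exists>fg. poly_over K (fst fg) \<and> poly_over K (snd fg) \<and> poly (snd fg) t \<noteq> 0 \<and>
      coeff p i = poly (fst fg) t / poly (snd fg) t" by (intro exI[of _ "(f, g)"]) simp
  qed
  then obtain FG where FG: "\<And>i. poly_over K (fst (FG i)) \<and> poly_over K (snd (FG i)) \<and> poly (snd (FG i)) t \<noteq> 0 \<and>
      coeff p i = poly (fst (FG i)) t / poly (snd (FG i)) t" by metis
  define F where "F i = fst (FG i)" for i
  define G where "G i = snd (FG i)" for i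
  define n where "n = degree p"
  define Q where "Q j = F j * (\<Prod>k\<in>{..n} - {j}. G k)" for j
  define D where "D = (\<Prod>k\<in>{..n}. poly (G k) t)"
  have D0: "D \<noteq> 0" unfolding D_def using FG G_def by simp
  have QK: "\<forall>j. poly_over K (Q j)" unfolding Q_def using FG F_def G_def
    by (auto intro!: po_mult po_prod)
  have pQ: "\<And>j. j \<le> n \<Longrightarrow> poly (Q j) t = coeff p j * D"
  proof -
    fix j assume j: "j \<le> n"
    have "D = poly (G j) t * (\<Prod>k\<in>{..n} - {j}. poly (G k) t)"
      unfolding D_def using j by (simp add: prod.remove)
    moreover have "coeff p j * poly (G j) t = poly (F j) t" using FG[of j] F_def G_def by simp
    ultimately show "poly (Q j) t = coeff p j * D"
      unfolding Q_def by (simp add: poly_prod mult.assoc[symmetric])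
  qed
  have "(\<Sum>j\<le>n. poly (Q j) t * z ^ j) = D * (\<Sum>j\<le>n. coeff p j * z ^ j)"
    by (simp add: pQ sum_distrib_left algebra_simps)
  also have "\<dots> = D * poly p z" by (simp add: poly_altdef n_def)
  finally have rel: "(\<Sum>j\<le>n. poly (Q j) t * z ^ j) = 0" using p(3) by simp
  have "poly (Q n) t \<noteq> 0" using pQ[of n] D0 p(1) by (simp add: n_def)
  then show ?thesis unfolding relK_def using QK rel by blast
qed

lemma swap:
  assumes "relK x y" "y \<notin> K" shows "relK y x"
proof -
  obtain Q n j0 where Q: "\<forall>j. poly_over K (Q j)" "(\<Sum>j\<le>n. poly (Q j) x * y ^ j) = 0"
      "j0 \<le> n" "poly (Q j0) x \<noteq> 0"
    using assms(1) unfolding relK_def by blast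
  define m where "m = (\<Sum>j\<le>n. degree (Q j))"
  have dm: "\<And>j. j \<le> n \<Longrightarrow> degree (Q j) \<le> m"
    unfolding m_def by (rule member_le_sum) auto
  define Q' where "Q' i = (\<Sum>j\<le>n. monom (coeff (Q j) i) j)" for i
  have Q'K: "\<forall>i. poly_over K (Q' i)" unfolding Q'_def
    by (intro allI po_sum po_monom) (use Q(1) in \<open>auto simp: poly_over_def\<close>)
  have pQ': "\<And>i. poly (Q' i) y = (\<Sum>j\<le>n. coeff (Q j) i * y ^ j)"
    unfolding Q'_def poly_sum poly_monom by simp
  have "(\<Sum>i\<le>m. poly (Q' i) y * x ^ i) = (\<Sum>i\<le>m. \<Sum>j\<le>n. coeff (Q j) i * x ^ i * y ^ j)"
    unfolding pQ' by (simp add: sum_distrib_left sum_distrib_right mult_ac)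
  also have "\<dots> = (\<Sum>j\<le>n. \<Sum>i\<le>m. coeff (Q j) i * x ^ i * y ^ j)"
    by (rule sum.swap)
  also have "\<dots> = (\<Sum>j\<le>n. poly (Q j) x * y ^ j)"
  proof (rule sum.cong)
    fix j assume "j \<in> {..n}"
    then have "poly (Q j) x = (\<Sum>i\<le>m. coeff (Q j) i * x ^ i)" using dm poly_altdef_ext by simp
    then show "(\<Sum>i\<le>m. coeff (Q j) i * x ^ i * y ^ j) = poly (Q j) x * y ^ j"
      by (simp add: sum_distrib_right)
  qed simp
  finally have rel: "(\<Sum>i\<le>m. poly (Q' i) y * x ^ i) = 0" using Q(2) by simp
  define i0 where "i0 = degree (Q j0)"
  have Qj0: "Q j0 \<noteq> 0" using Q(4) by auto
  have i0m: "i0 \<le> m" using dm Q(3) i0_def by simp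
  have "coeff (Q' i0) j0 = coeff (Q j0) i0"
    unfolding Q'_def coeff_sum coeff_monom using Q(3) by simp
  then have "Q' i0 \<noteq> 0" using Qj0 i0_def by auto
  then have "poly (Q' i0) y \<noteq> 0" using notK_nonroot assms(2) Q'K by blast
  then show ?thesis unfolding relK_def using Q'K rel i0m by blast
qed

lemma gen_in_RatF: assumes "b \<in> K" shows "gen_subfield (insert t0 K) \<subseteq> RatF (t0 - b)"
proof -
  have "t0 \<in> RatF (t0 - b)" using RatF_shift[OF assms, of "t0 - b"] by simp
  moreover have "K \<subseteq> RatF (t0 - b)" using RatF_K by blast
  ultimately show ?thesis unfolding gen_subfield_def using RatF_sub by blast
qed

lemma alg_mono: "algebraic_over F z \<Longrightarrow> F \<subseteq> F' \<Longrightarrow> algebraic_over F' z"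
  unfolding algebraic_over_def poly_over_def by blast

end

theorem lemma7p11:
  fixes v :: "'l::field \<Rightarrow> 'g::linordered_ab_group_add"
    and K :: "'l set" and c d :: 'l
  assumes "valuation v"
    and "alg_closed_subfield K"
    and "trdeg_one_over K"
    and "c \<notin> K" and "d \<notin> K"
  shows "stabE v K c = stabE v K d"
proof -
  interpret vf v K using assms(1,2) by unfold_locales
  obtain t where t: "\<not> algebraic_over K t" "\<forall>x. algebraic_over (gen_subfield (insert t K)) x"
    using assms(3) unfolding trdeg_one_over_def by blast
  have tK: "t \<notin> K"
  proof
    assume tK: "t \<in> K"
    have "poly_over K [:-t, 1:]" using po_pCons po_const K1 Kneg[OF tK] by simp
    then have "algebraic_over K t" unfolding algebraic_over_def
      by (intro exI[of _ "[:-t, 1:]"]) simp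
    then show False using t(1) by simp
  qed
  have eq: "\<And>w. w \<notin> K \<Longrightarrow> stabE v K w = stabE v K t"
  proof -
    fix w assume w: "w \<notin> K"
    have r1: "\<forall>b0\<in>K. relK t (w - b0)"
    proof
      fix b0 assume "b0 \<in> K"
      have "algebraic_over (RatF t) (w - b0)"
        using alg_mono[OF t(2)[rule_format, of "w - b0"] gen_in_RatF[OF K0, of t]] by simp
      then show "relK t (w - b0)" by (rule alg_rel)
    qed
    have r2: "\<forall>b0\<in>K. relK w (t - b0)"
    proof
      fix b0 assume b0: "b0 \<in> K"
      have "algebraic_over (RatF (t - b0)) w"
        using alg_mono[OF t(2)[rule_format, of w] gen_in_RatF[OF b0, of t]] by simp
      then have "relK (t - b0) w" by (rule alg_rel)
      then show "relK w (t - b0)" using swap w by blast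
    qed
    show "stabE v K w = stabE v K t"
      using stab_sub[OF tK w r1] stab_sub[OF w tK r2] by blast
  qed
  show ?thesis using eq assms(4,5) by simp
qed

end
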